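(* Let $d\ge 1$, $0<\alpha<1$ and $\beta=1-\alpha$. Let $\sigma$ satisfy the Activation Assumption below, and let $\overline{A}\colon[0,1]\to\mathbb{R}^{d\times d}$ and $\overline{b}\colon[0,1]\to\mathbb{R}^d$ be deterministic functions for which there exist $M>0$, $\kappa>0$ with $\|\overline{A}_t-\overline{A}_s\|^2+\|\overline{b}_t-\overline{b}_s\|^2\le M|t-s|^\kappa$ for all $s,t\in[0,1]$. For each $L\in\mathbb{N}$ and $x\in\mathbb{R}^d$ define the (deterministic) hidden states $$h^{(L)}_0=x,\qquad h^{(L)}_{k+1}=h^{(L)}_k+L^{-\alpha}\,\sigma_d\!\left(A^{(L)}_k h^{(L)}_k+b^{(L)}_k\right),\quad k=0,\dots,L-1,$$ with $A^{(L)}_k=L^{-\beta}\overline{A}_{k/L}$ and $b^{(L)}_k=L^{-\beta}\overline{b}_{k/L}$. Assume there exist $p_1>4$ and $C_0>0$ such that $\sup_{0\le k\le L}\|h^{(L)}_k\|^{p_1}\le C_0$ for all $L$. Let $H$ be the solution of the linear ODE $$\frac{\mathrm{d}H_t}{\mathrm{d}t}=\overline{A}_tH_t+\overline{b}_t,\qquad H_0=x.$$ Then $\displaystyle\lim_{L\to\infty}\sup_{0\le t\le 1}\left\|H_t-h^{(L)}_{\lfloor tL\rfloor}\right\|=0.$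
   Context: $\|\cdot\|$ is the Euclidean norm on vectors and the Frobenius norm on matrices. For $\sigma\colon\mathbb{R}\to\mathbb{R}$, $\sigma_d(y)=(\sigma(y_1),\dots,\sigma(y_d))^\top$ denotes the componentwise extension to $y\in\mathbb{R}^d$. $\lfloor u\rfloor$ is the integer part of $u$. Activation Assumption: $\sigma\in\mathcal{C}^3(\mathbb{R},\mathbb{R})$, $\sigma(0)=0$, $\sigma'(0)=1$, and $\sigma'''$ is bounded on $\mathbb{R}$. *)

theory Defs
  imports "HOL-Analysis.Analysis"
begin

definition sigma_vec :: "(real \<Rightarrow> real) \<Rightarrow> real ^ 'n \<Rightarrow> real ^ 'n" where
  "sigma_vec \<sigma> y = (\<chi> i. \<sigma> (y $ i))"

definition activation_ok :: "(real \<Rightarrow> real) \<Rightarrow> bool" where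
  "activation_ok \<sigma> \<longleftrightarrow>
     (\<forall>x. \<sigma> differentiable at x) \<and>
     (\<forall>x. deriv \<sigma> differentiable at x) \<and>
     (\<forall>x. (deriv ^^ 2) \<sigma> differentiable at x) \<and>
     continuous_on UNIV ((deriv ^^ 3) \<sigma>) \<and>
     \<sigma> 0 = 0 \<and> deriv \<sigma> 0 = 1 \<and>
     (\<exists>B. \<forall>x. \<bar>(deriv ^^ 3) \<sigma> x\<bar> \<le> B)"

fun hidden :: "(real \<Rightarrow> real) \<Rightarrow> real \<Rightarrow> (real \<Rightarrow> real ^ 'n ^ 'n) \<Rightarrow> (real \<Rightarrow> real ^ 'n)
               \<Rightarrow> real ^ 'n \<Rightarrow> nat \<Rightarrow> nat \<Rightarrow> real ^ 'n" where
  "hidden \<sigma> \<alpha> Abar bbar x L 0 = x"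
| "hidden \<sigma> \<alpha> Abar bbar x L (Suc k) =
     hidden \<sigma> \<alpha> Abar bbar x L k +
     (real L powr (-\<alpha>)) *\<^sub>R sigma_vec \<sigma>
        (((real L powr (-(1 - \<alpha>))) *\<^sub>R Abar (real k / real L)) *v hidden \<sigma> \<alpha> Abar bbar x L k
         + (real L powr (-(1 - \<alpha>))) *\<^sub>R bbar (real k / real L))"

end

theory Submission
  imports Defs
begin

lemma mv_bound:
  fixes A :: "real^'n^'m"
  shows "norm (A *v x) \<le> real CARD('m) * real CARD('n) * norm A * norm x"
proof -
  have lin: "bounded_linear ((*v) A)" by (rule matrix_vector_mul_bounded_linear)
  have "norm (A *v x) \<le> onorm ((*v) A) * norm x" using onorm[OF lin] .
  also have "onorm ((*v) A) \<le> real CARD('m) * real CARD('n) * norm A"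
    by (rule onorm_le_matrix_component) (rule order_trans[OF component_le_norm_cart Finite_Cartesian_Product.norm_nth_le])
  finally show ?thesis by (simp add: mult_right_mono)
qed

lemma mv_cont:
  fixes A :: "real \<Rightarrow> real^'n^'m" and v :: "real \<Rightarrow> real^'n"
  assumes "continuous_on S A" "continuous_on S v"
  shows "continuous_on S (\<lambda>t. A t *v v t)"
  unfolding matrix_vector_mult_def
  by (intro continuous_intros assms)

lemma gronwall:
  fixes e :: "nat \<Rightarrow> real"
  assumes "\<And>k. k < n \<Longrightarrow> e (Suc k) \<le> (1 + a) * e k + c" "e 0 = 0" "a \<ge> 0" "c \<ge> 0"
  shows "k \<le> n \<Longrightarrow> e k \<le> (1+a)^k * (real k * c)"
proof (induction k)
  case 0 then show ?case using assms by simp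
next
  case (Suc k)
  have p: "(1+a)^k \<ge> 1" using assms by simp
  have "e (Suc k) \<le> (1 + a) * e k + c" using assms Suc by simp
  also have "\<dots> \<le> (1+a) * ((1+a)^k * (real k * c)) + c"
    using Suc assms by (intro add_right_mono mult_left_mono) auto
  also have "\<dots> \<le> (1+a) * ((1+a)^k * (real k * c)) + (1+a)*(1+a)^k * c"
  proof -
    have "(1::real) \<le> (1+a)^(Suc k)" using assms(3) by (intro one_le_power) simp
    hence "(1::real) \<le> (1+a)*(1+a)^k" by simp
    from mult_right_mono[OF this assms(4)] show ?thesis by simp
  qed
  also have "\<dots> = (1+a)^(Suc k) * (real (Suc k) * c)" by (simp add: algebra_simps)
  finally show ?case .
qed

lemma sigma_vec_bound:
  fixes y :: "real^'n"
  assumes "\<And>z. \<bar>z\<bar> < d \<Longrightarrow> \<bar>\<sigma> z - z\<bar> \<le> c * \<bar>z\<bar>" "c \<ge> 0" "norm y < d"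
  shows "norm ((\<chi> i. \<sigma> (y $ i)) - y) \<le> c * norm y"
proof -
  have "norm ((\<chi> i. \<sigma> (y $ i)) - y) = L2_set (\<lambda>i. \<bar>\<sigma> (y $ i) - y $ i\<bar>) UNIV"
    by (simp add: norm_vec_def)
  also have "\<dots> \<le> L2_set (\<lambda>i. c * \<bar>y $ i\<bar>) UNIV"
  proof (rule L2_set_mono)
    fix i
    have "\<bar>y $ i\<bar> < d" using assms(3) component_le_norm_cart[of y i] by simp
    then show "\<bar>\<sigma> (y $ i) - y $ i\<bar> \<le> c * \<bar>y $ i\<bar>" using assms(1) by blast
  qed simp
  also have "\<dots> = c * norm y" by (simp add: norm_vec_def L2_set_right_distrib assms)
  finally show ?thesis .
qed

lemma hoelder_cont:
  fixes f :: "real \<Rightarrow> 'a::real_normed_vector"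
  assumes "\<And>s t. s \<in> {0..1} \<Longrightarrow> t \<in> {0..1} \<Longrightarrow> (norm (f t - f s))\<^sup>2 \<le> M * \<bar>t - s\<bar> powr \<kappa>"
    "M > 0" "\<kappa> > 0"
  shows "continuous_on {0..1} f"
  unfolding continuous_on_iff
proof (intro ballI allI impI)
  fix s e :: real assume s: "s \<in> {0..1}" and e: "(0::real) < e"
  define d where "d = (e^2 / M) powr (1/\<kappa>)"
  have d: "d > 0" using e assms by (simp add: d_def)
  show "\<exists>d>0. \<forall>t\<in>{0..1}. dist t s < d \<longrightarrow> dist (f t) (f s) < e"
  proof (intro exI[of _ d] conjI ballI impI d)
    fix t assume t: "t \<in> {0..1}" and dt: "dist t s < d"
    have "\<bar>t - s\<bar> powr \<kappa> < d powr \<kappa>"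
      using dt assms by (intro powr_less_mono2) (auto simp: dist_real_def)
    also have "d powr \<kappa> = e^2 / M" using e assms by (simp add: d_def powr_powr)
    finally have "M * \<bar>t - s\<bar> powr \<kappa> < e^2" using assms by (simp add: field_simps)
    with assms(1)[OF s t] have "(norm (f t - f s))\<^sup>2 < e^2" by linarith
    then have "norm (f t - f s) < e" using e by (simp add: power_less_imp_less_base)
    then show "dist (f t) (f s) < e" by (simp add: dist_norm)
  qed
qed
lemma sig_small:
  fixes \<sigma> :: "real \<Rightarrow> real"
  assumes "\<sigma> differentiable at 0" "deriv \<sigma> 0 = 1" "\<sigma> 0 = 0" "c > 0"
  shows "\<exists>d>0. \<forall>z. \<bar>z\<bar> < d \<longrightarrow> \<bar>\<sigma> z - z\<bar> \<le> c * \<bar>z\<bar>"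
proof -
  have "(\<sigma> has_real_derivative 1) (at 0)"
    using assms DERIV_deriv_iff_real_differentiable by metis
  then have "(\<sigma> has_derivative (*) 1) (at 0 within UNIV)"
    by (simp add: has_field_derivative_def)
  then obtain d where "d > 0" "\<forall>y\<in>UNIV. norm (y - 0) < d \<longrightarrow> norm (\<sigma> y - \<sigma> 0 - 1 * (y - 0)) \<le> c * norm (y - (0::real))"
    using assms(4) unfolding has_derivative_within_alt by blast
  then show ?thesis using assms(3) by (intro exI[of _ d]) auto
qed
theorem theorem1:
  fixes \<sigma> :: "real \<Rightarrow> real" and \<alpha> :: real
    and Abar :: "real \<Rightarrow> real ^ 'n ^ 'n" and bbar :: "real \<Rightarrow> real ^ 'n"
    and x :: "real ^ 'n" and H :: "real \<Rightarrow> real ^ 'n"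
  assumes alpha: "0 < \<alpha>" "\<alpha> < 1"
    and act: "activation_ok \<sigma>"
    and hoelder: "\<exists>M>0. \<exists>\<kappa>>0. \<forall>s\<in>{0..1}. \<forall>t\<in>{0..1}.
        (norm (Abar t - Abar s))\<^sup>2 + (norm (bbar t - bbar s))\<^sup>2 \<le> M * \<bar>t - s\<bar> powr \<kappa>"
    and bounded: "\<exists>p1>4. \<exists>C0>0. \<forall>L\<ge>1. \<forall>k\<le>L.
        norm (hidden \<sigma> \<alpha> Abar bbar x L k) powr p1 \<le> C0"
    and H0: "H 0 = x"
    and Hode: "\<forall>t\<in>{0..1}. (H has_vector_derivative (Abar t *v H t + bbar t)) (at t within {0..1})"
  shows "(\<lambda>L. SUP t\<in>{0..1}. norm (H t - hidden \<sigma> \<alpha> Abar bbar x L (nat \<lfloor>t * real L\<rfloor>)))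
           \<longlonglongrightarrow> 0"
proof -
  define h where "h = hidden \<sigma> \<alpha> Abar bbar x"
  define F where "F = (\<lambda>t. Abar t *v H t + bbar t)"
  obtain M \<kappa> where M: "M > 0" and \<kappa>: "\<kappa> > 0" and hol: "\<forall>s\<in>{0..1}. \<forall>t\<in>{0..1}.
        (norm (Abar t - Abar s))\<^sup>2 + (norm (bbar t - bbar s))\<^sup>2 \<le> M * \<bar>t - s\<bar> powr \<kappa>"
    using hoelder by blast
  have holA: "(norm (Abar t - Abar s))\<^sup>2 \<le> M * \<bar>t - s\<bar> powr \<kappa>" if "s \<in> {0..1}" "t \<in> {0..1}" for s t
    using hol that by (smt (verit) zero_le_power2)
  have holB: "(norm (bbar t - bbar s))\<^sup>2 \<le> M * \<bar>t - s\<bar> powr \<kappa>" if "s \<in> {0..1}" "t \<in> {0..1}" for s t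
    using hol that by (smt (verit) zero_le_power2)
  have contA: "continuous_on {0..1} Abar" by (rule hoelder_cont[OF holA M \<kappa>])
  have contB: "continuous_on {0..1} bbar" by (rule hoelder_cont[OF holB M \<kappa>])
  have dev: "norm (f t - f 0) \<le> sqrt M"
    if "\<And>s t. s \<in> {0..1} \<Longrightarrow> t \<in> {0..1} \<Longrightarrow> (norm (f t - f s))\<^sup>2 \<le> M * \<bar>t - s\<bar> powr \<kappa>"
       "t \<in> {0..1}" for f :: "real \<Rightarrow> 'z::real_normed_vector" and t
  proof (rule real_le_rsqrt)
    have "\<bar>t - 0\<bar> powr \<kappa> \<le> 1" using that(2) \<kappa> powr_mono2[of \<kappa> t 1] by simp
    then have "M * \<bar>t - 0\<bar> powr \<kappa> \<le> M" using M by (simp add: mult_left_le)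
    with that(1)[of 0 t] that(2) show "(norm (f t - f 0))\<^sup>2 \<le> M" by simp
  qed
  define KA0 where "KA0 = norm (Abar 0) + sqrt M"
  define KA where "KA = real CARD('n) * real CARD('n) * KA0"
  define KB where "KB = norm (bbar 0) + sqrt M"
  have nA: "norm (Abar t) \<le> KA0" if "t \<in> {0..1}" for t
    using dev[OF holA that] norm_triangle_ineq[of "Abar 0" "Abar t - Abar 0"] unfolding KA0_def by simp
  have nB: "norm (bbar t) \<le> KB" if "t \<in> {0..1}" for t
    using dev[OF holB that] norm_triangle_ineq[of "bbar 0" "bbar t - bbar 0"] unfolding KB_def by simp
  have KA0: "KA0 \<ge> 0" unfolding KA0_def using M by simp
  have KA: "KA \<ge> 0" unfolding KA_def using KA0 by simp
  have KB: "KB \<ge> 0" unfolding KB_def using M by simp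
  have mvA: "norm (Abar t *v v) \<le> KA * norm v" if "t \<in> {0..1}" for t v
  proof -
    have "norm (Abar t *v v) \<le> real CARD('n) * real CARD('n) * norm (Abar t) * norm v" by (rule mv_bound)
    also have "\<dots> \<le> KA * norm v" unfolding KA_def
      using nA[OF that] by (intro mult_right_mono mult_left_mono) auto
    finally show ?thesis .
  qed
  have contH: "continuous_on {0..1} H"
    using Hode has_vector_derivative_continuous continuous_on_eq_continuous_within by blast
  have contF: "continuous_on {0..1} F"
    unfolding F_def by (intro continuous_on_add mv_cont contA contB contH)
  have ucH: "uniformly_continuous_on {0..1} H" by (rule compact_uniformly_continuous[OF contH]) simp
  have ucF: "uniformly_continuous_on {0..1} F" by (rule compact_uniformly_continuous[OF contF]) simp
  obtain p1 C0 where p1: "p1 > 4" and C0: "C0 > 0" and hb: "\<forall>L\<ge>1. \<forall>k\<le>L. norm (h L k) powr p1 \<le> C0"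
    using bounded unfolding h_def by blast
  define R where "R = C0 powr (1/p1)"
  have R: "R \<ge> 0" unfolding R_def by simp
  have hR: "norm (h L k) \<le> R" if "L \<ge> 1" "k \<le> L" for L k
  proof (cases "norm (h L k) = 0")
    case True then show ?thesis using R by simp
  next
    case False
    have "norm (h L k) = (norm (h L k) powr p1) powr (1/p1)"
      using False p1 by (simp add: powr_powr)
    also have "\<dots> \<le> C0 powr (1/p1)"
      using hb that p1 by (intro powr_mono2) auto
    finally show ?thesis unfolding R_def .
  qed
  define Kv where "Kv = KA * R + KB"
  have Kv: "Kv \<ge> 0" unfolding Kv_def using KA R KB by simp
  have vb: "norm (Abar (real k / real L) *v h L k + bbar (real k / real L)) \<le> Kv"
    if "L \<ge> 1" "k \<le> L" for L k
  proof -
    have t: "real k / real L \<in> {0..1}" using that by auto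
    have "norm (Abar (real k / real L) *v h L k + bbar (real k / real L))
        \<le> norm (Abar (real k / real L) *v h L k) + norm (bbar (real k / real L))" by (rule norm_triangle_ineq)
    also have "\<dots> \<le> KA * R + KB"
      using mvA[OF t, of "h L k"] hR[OF that] nB[OF t] KA
      by (smt (verit) mult_left_mono)
    finally show ?thesis unfolding Kv_def .
  qed
  have sig: "\<exists>d>0. \<forall>z. \<bar>z\<bar> < d \<longrightarrow> \<bar>\<sigma> z - z\<bar> \<le> c * \<bar>z\<bar>" if "c > 0" for c
    using act that unfolding activation_ok_def by (intro sig_small) auto
  show ?thesis
  proof (rule LIMSEQ_I)
    fix r :: real assume r: "r > 0"
    define E where "E = exp KA"
    have E: "E > 0" unfolding E_def by simp
    define \<epsilon> where "\<epsilon> = r / (4 * (1 + E))"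
    have \<epsilon>: "\<epsilon> > 0" unfolding \<epsilon>_def using r E by simp
    define \<epsilon>2 where "\<epsilon>2 = \<epsilon> / (Kv + 1)"
    have \<epsilon>2: "\<epsilon>2 > 0" unfolding \<epsilon>2_def using \<epsilon> Kv by simp
    have \<epsilon>2Kv: "\<epsilon>2 * Kv \<le> \<epsilon>" unfolding \<epsilon>2_def using \<epsilon> Kv by (simp add: field_simps)
    obtain dH where dH: "dH > 0" "\<forall>s\<in>{0..1}. \<forall>t\<in>{0..1}. dist t s < dH \<longrightarrow> dist (H t) (H s) < \<epsilon>"
      using ucH \<epsilon> unfolding uniformly_continuous_on_def by metis
    obtain dF where dF: "dF > 0" "\<forall>s\<in>{0..1}. \<forall>t\<in>{0..1}. dist t s < dF \<longrightarrow> dist (F t) (F s) < \<epsilon>"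
      using ucF \<epsilon> unfolding uniformly_continuous_on_def by metis
    obtain ds where ds: "ds > 0" "\<forall>z. \<bar>z\<bar> < ds \<longrightarrow> \<bar>\<sigma> z - z\<bar> \<le> \<epsilon>2 * \<bar>z\<bar>"
      using sig[OF \<epsilon>2] by blast
    have ev1: "eventually (\<lambda>L. real L powr (-(1-\<alpha>)) * Kv < ds) sequentially"
    proof -
      have "((\<lambda>L. real L powr (-(1-\<alpha>))) \<longlongrightarrow> 0) sequentially"
        using alpha by (intro tendsto_neg_powr filterlim_real_sequentially) auto
      then have "((\<lambda>L. real L powr (-(1-\<alpha>)) * Kv) \<longlongrightarrow> 0 * Kv) sequentially"
        by (intro tendsto_mult tendsto_const)
      then show ?thesis using ds(1) by (simp add: order_tendstoD(2))
    qed
    obtain N0 :: nat where N0: "1 / min dH dF < real N0" using reals_Archimedean2 by blast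
    have ev2: "eventually (\<lambda>L. L \<ge> max 1 N0) sequentially" by (rule eventually_ge_at_top)
    obtain N where N: "\<forall>L\<ge>N. real L powr (-(1-\<alpha>)) * Kv < ds \<and> L \<ge> max 1 N0"
      using eventually_conj[OF ev1 ev2] unfolding eventually_sequentially by blast
    show "\<exists>no. \<forall>L\<ge>no. norm ((SUP t\<in>{0..1}. norm (H t - hidden \<sigma> \<alpha> Abar bbar x L (nat \<lfloor>t * real L\<rfloor>))) - 0) < r"
    proof (intro exI allI impI)
      fix L assume LN: "L \<ge> N"
      have L1: "L \<ge> 1" and LN0: "L \<ge> N0" and Lds: "real L powr (-(1-\<alpha>)) * Kv < ds" using N LN by auto
      have Lpos: "real L > 0" using L1 by simp
      have invL: "1 / real L < dH" "1 / real L < dF"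
      proof -
        have "1 / min dH dF < real L" using N0 LN0 by linarith
        then have "1 < real L * min dH dF" using dH dF by (simp add: divide_less_eq mult.commute)
        then have "1 / real L < min dH dF" by (subst pos_divide_less_eq[OF Lpos]) (metis mult.commute)
        then show "1 / real L < dH" "1 / real L < dF" by auto
      qed
      define La where "La = real L powr (-\<alpha>)"
      define Lb where "Lb = real L powr (-(1-\<alpha>))"
      have La: "La > 0" and Lb: "Lb > 0" unfolding La_def Lb_def using Lpos by auto
      have LaLb: "La * Lb = 1 / real L"
      proof -
        have "La * Lb = real L powr (-\<alpha> + -(1-\<alpha>))" unfolding La_def Lb_def by (rule powr_add[symmetric])
        also have "\<dots> = real L powr (-1)" by simp
        also have "\<dots> = 1 / real L" using Lpos by (simp add: powr_minus divide_inverse)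
        finally show ?thesis .
      qed
      define e where "e = (\<lambda>k. norm (H (real k / real L) - h L k))"
      have step: "e (Suc k) \<le> (1 + KA / real L) * e k + 2 * \<epsilon> / real L" if kL: "k < L" for k
      proof -
        define t0 where "t0 = real k / real L"
        define t1 where "t1 = real (Suc k) / real L"
        have t0: "t0 \<in> {0..1}" and t1: "t1 \<in> {0..1}" using kL Lpos unfolding t0_def t1_def by auto
        have t01: "t1 - t0 = 1 / real L" unfolding t0_def t1_def by (simp add: diff_divide_distrib[symmetric])
        have t0t1: "t0 \<le> t1" using t01 Lpos by (smt (verit) divide_pos_pos of_nat_0_less_iff zero_less_one)
        have sub: "{t0..t1} \<subseteq> {0..1}" using t0 t1 by auto
        have D1: "norm (H t1 - H t0 - (t1 - t0) *\<^sub>R F t0) \<le> norm (t1 - t0) * \<epsilon>"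
        proof (rule vector_differentiable_bound_linearization[where S="{t0..t1}"])
          show "(H has_vector_derivative F s) (at s within {t0..t1})" if "s \<in> {t0..t1}" for s
            using Hode sub that unfolding F_def by (meson has_vector_derivative_within_subset subsetD)
          show "closed_segment t0 t1 \<subseteq> {t0..t1}" using t0t1 by (simp add: closed_segment_eq_real_ivl)
          show "t0 \<in> {t0..t1}" using t0t1 by simp
          show "norm (F s - F t0) \<le> \<epsilon>" if "s \<in> {t0..t1}" for s
          proof -
            have "dist s t0 < dF" using that t01 invL by (auto simp: dist_real_def)
            then have "dist (F s) (F t0) < \<epsilon>" using dF(2) sub that t0 by blast
            then show ?thesis by (simp add: dist_norm)
          qed
        qed
        define w where "w = Abar t0 *v h L k + bbar t0"
        define y where "y = Lb *\<^sub>R w"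
        have hs: "h L (Suc k) = h L k + La *\<^sub>R sigma_vec \<sigma> y"
          unfolding h_def La_def y_def w_def Lb_def t0_def
          by (simp add: scaleR_add_right scaleR_matrix_vector_assoc)
        have w: "norm w \<le> Kv" unfolding w_def t0_def using vb[OF L1] kL by simp
        have ny: "norm y \<le> Lb * Kv" unfolding y_def using w Lb by (simp add: mult_left_mono)
        have ny2: "norm y < ds" using ny Lds unfolding Lb_def by simp
        have sv: "norm (sigma_vec \<sigma> y - y) \<le> \<epsilon>2 * norm y"
          unfolding sigma_vec_def using sigma_vec_bound[of ds \<sigma> \<epsilon>2 y] ds \<epsilon>2 ny2 by auto
        have D2eq: "h L (Suc k) - h L k - (1 / real L) *\<^sub>R w = La *\<^sub>R (sigma_vec \<sigma> y - y)"
          unfolding hs y_def using LaLb[symmetric] by (simp add: scaleR_diff_right)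
        have D2: "norm (h L (Suc k) - h L k - (1 / real L) *\<^sub>R w) \<le> \<epsilon> / real L"
        proof -
          have "norm (La *\<^sub>R (sigma_vec \<sigma> y - y)) = La * norm (sigma_vec \<sigma> y - y)" using La by simp
          also have "\<dots> \<le> La * (\<epsilon>2 * (Lb * Kv))"
            using sv ny La \<epsilon>2 by (meson mult_left_mono order_trans less_imp_le)
          also have "\<dots> = (\<epsilon>2 * Kv) * (La * Lb)" by (simp add: algebra_simps)
          also have "\<dots> = (\<epsilon>2 * Kv) / real L" using LaLb by simp
          also have "\<dots> \<le> \<epsilon> / real L" using \<epsilon>2Kv Lpos by (simp add: divide_right_mono)
          finally show ?thesis unfolding D2eq .
        qed
        have eq: "H t1 - h L (Suc k) = (H t0 - h L k) + (1 / real L) *\<^sub>R (Abar t0 *v (H t0 - h L k))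
            + (H t1 - H t0 - (t1 - t0) *\<^sub>R F t0) - (h L (Suc k) - h L k - (1 / real L) *\<^sub>R w)"
          unfolding t01 F_def w_def by (simp add: matrix_vector_mult_diff_distrib algebra_simps)
        have "e (Suc k) = norm (H t1 - h L (Suc k))" unfolding e_def t1_def by simp
        also have "\<dots> \<le> norm (H t0 - h L k) + norm ((1 / real L) *\<^sub>R (Abar t0 *v (H t0 - h L k)))
            + norm (H t1 - H t0 - (t1 - t0) *\<^sub>R F t0) + norm (h L (Suc k) - h L k - (1 / real L) *\<^sub>R w)"
          unfolding eq by (smt (verit) norm_triangle_ineq norm_triangle_ineq4)
        also have "\<dots> \<le> e k + (1 / real L) * (KA * e k) + \<epsilon> / real L + \<epsilon> / real L"
        proof -
          have "norm ((1 / real L) *\<^sub>R (Abar t0 *v (H t0 - h L k))) \<le> (1 / real L) * (KA * e k)"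
            using mvA[OF t0, of "H t0 - h L k"] Lpos unfolding e_def t0_def
            by (simp add: divide_right_mono)
          moreover have "norm (H t1 - H t0 - (t1 - t0) *\<^sub>R F t0) \<le> \<epsilon> / real L"
            using D1 t01 Lpos by simp
          ultimately show ?thesis using D2 unfolding e_def t0_def by linarith
        qed
        also have "\<dots> = (1 + KA / real L) * e k + 2 * \<epsilon> / real L" by (simp add: algebra_simps)
        finally show ?thesis .
      qed
      have e0: "e 0 = 0" unfolding e_def h_def using H0 by simp
      have ebound: "e k \<le> E * (2 * \<epsilon>)" if "k \<le> L" for k
      proof -
        have "e k \<le> (1 + KA / real L)^k * (real k * (2 * \<epsilon> / real L))"
          using gronwall[of L e "KA / real L" "2 * \<epsilon> / real L" k] step e0 KA Lpos \<epsilon> that by auto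
        also have "\<dots> \<le> E * (2 * \<epsilon>)"
        proof (rule mult_mono)
          have "(1 + KA / real L)^k \<le> exp (KA / real L) ^ k"
            using KA Lpos by (intro power_mono exp_ge_add_one_self) auto
          also have "\<dots> = exp (real k * (KA / real L))" by (rule exp_of_nat_mult[symmetric])
          also have "\<dots> \<le> exp KA"
          proof -
            have "real k * (KA / real L) \<le> real L * (KA / real L)"
              using that KA Lpos by (intro mult_right_mono) auto
            then show ?thesis using Lpos by simp
          qed
          finally show "(1 + KA / real L)^k \<le> E" unfolding E_def .
          have "real k * (2 * \<epsilon> / real L) \<le> real L * (2 * \<epsilon> / real L)"
            using that \<epsilon> Lpos by (intro mult_right_mono) auto
          then show "real k * (2 * \<epsilon> / real L) \<le> 2 * \<epsilon>" using Lpos by simp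
        qed (use E \<epsilon> in auto)
        finally show ?thesis .
      qed
      have pt: "norm (H t - h L (nat \<lfloor>t * real L\<rfloor>)) \<le> \<epsilon> + E * (2 * \<epsilon>)" if t: "t \<in> {0..1}" for t
      proof -
        define k where "k = nat \<lfloor>t * real L\<rfloor>"
        have fl0: "\<lfloor>t * real L\<rfloor> \<ge> 0" using t by auto
        have rk: "real k = of_int \<lfloor>t * real L\<rfloor>" unfolding k_def using fl0 by simp
        have "real k \<le> t * real L" using rk by linarith
        then have k1: "real k / real L \<le> t" using Lpos by (simp add: divide_le_eq)
        have "t * real L < real k + 1" using rk by linarith
        then have "t < (real k + 1) / real L" using Lpos by (simp add: pos_less_divide_eq)
        then have k2: "t - real k / real L < 1 / real L" by (simp add: add_divide_distrib)
        have kL: "k \<le> L"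
        proof -
          have "real k \<le> real L" using \<open>real k \<le> t * real L\<close> t Lpos
            by (smt (verit) mult_left_le_one_le of_nat_0_le_iff atLeastAtMost_iff mult.commute)
          then show ?thesis by simp
        qed
        have t0: "real k / real L \<in> {0..1}" using kL Lpos by auto
        have "dist t (real k / real L) < dH" using k1 k2 invL by (simp add: dist_real_def)
        then have "dist (H t) (H (real k / real L)) < \<epsilon>" using dH(2) t t0 by blast
        then have "norm (H t - H (real k / real L)) \<le> \<epsilon>" by (simp add: dist_norm)
        moreover have "norm (H t - h L k) \<le> norm (H t - H (real k / real L)) + e k"
          unfolding e_def using norm_triangle_ineq[of "H t - H (real k / real L)" "H (real k / real L) - h L k"] by simp
        ultimately show ?thesis using ebound[OF kL] unfolding k_def by linarith
      qed
      define S where "S = (SUP t\<in>{0..1}. norm (H t - hidden \<sigma> \<alpha> Abar bbar x L (nat \<lfloor>t * real L\<rfloor>)))"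
      have S1: "S \<le> \<epsilon> + E * (2 * \<epsilon>)" unfolding S_def using pt unfolding h_def
        by (intro cSUP_least) auto
      have S0: "0 \<le> S"
      proof -
        have "bdd_above ((\<lambda>t. norm (H t - hidden \<sigma> \<alpha> Abar bbar x L (nat \<lfloor>t * real L\<rfloor>))) ` {0..1})"
          using pt unfolding h_def by (intro bdd_aboveI2) auto
        from cSUP_upper[OF _ this, of 0] show ?thesis unfolding S_def by (smt (verit) atLeastAtMost_iff norm_ge_zero zero_less_one)
      qed
      have "\<epsilon> + E * (2 * \<epsilon>) < r"
      proof -
        have "\<epsilon> + E * (2 * \<epsilon>) = r * ((1 + 2 * E) / (4 * (1 + E)))" unfolding \<epsilon>_def by (simp add: algebra_simps add_divide_distrib)
        moreover have "(1 + 2 * E) / (4 * (1 + E)) < 1" using E by simp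
        ultimately show ?thesis using r by (metis mult.right_neutral mult_strict_left_mono)
      qed
      then show "norm ((SUP t\<in>{0..1}. norm (H t - hidden \<sigma> \<alpha> Abar bbar x L (nat \<lfloor>t * real L\<rfloor>))) - 0) < r"
        using S0 S1 unfolding S_def by simp
    qed
  qed
qed

end
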